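(* Let $X$ be a complex Banach space, $x\in X$ a unit vector, and $x^*\in X^*$ a functional that strongly exposes $x$. If $T=\{e^{tA}:t\ge 0\}$ is a $(C_0)$ contraction semigroup with generator $A$ such that \[\lim_{t\to\infty}|\langle T(t)x,x^*\rangle|=1,\] then $x$ is in the domain of $A$ and $Ax=i\lambda x$ for some real number $\lambda$.
   Context: Let $B$ denote the closed unit ball of $X$. For a unit vector $x^*\in X^*$ and $0<\alpha<1$, the slice is $S(B,x^*,\alpha)=\{y:\|y\|\le 1,\ \Re\langle y,x^*\rangle\ge 1-\alpha\}$. A functional $x^*\in X^*$ strongly exposes the unit vector $x$ if $\|x^*\|=1$, $\langle x,x^*\rangle = 1$, and $\lim_{\alpha\to0^+}\operatorname{diam} S(B,x^*,\alpha)=0$, where $\operatorname{diam} S=\sup\{\|y-z\|:y,z\in S\}$. *)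

theory Defs
  imports "HOL-Analysis.Analysis"
begin

text \<open>HOL has no type class of complex vector spaces.  A complex normed space is
encoded as a real normed space together with a real-linear map J (multiplication
by the imaginary unit) with J (J x) = - x, such that the induced complex scalar
multiplication is absolutely homogeneous for the norm.\<close>

definition cscale :: "('a::real_normed_vector \<Rightarrow> 'a) \<Rightarrow> complex \<Rightarrow> 'a \<Rightarrow> 'a" where
  "cscale J c x = Re c *\<^sub>R x + Im c *\<^sub>R J x"

definition complex_structure :: "('a::real_normed_vector \<Rightarrow> 'a) \<Rightarrow> bool" where
  "complex_structure J \<longleftrightarrow> linear J \<and> (\<forall>x. J (J x) = - x) \<and>
     (\<forall>c x. norm (cscale J c x) = cmod c * norm x)"

definition dual_functional :: "('a::real_normed_vector \<Rightarrow> 'a) \<Rightarrow> ('a \<Rightarrow> complex) \<Rightarrow> bool" where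
  "dual_functional J f \<longleftrightarrow> bounded_linear f \<and> (\<forall>x. f (J x) = \<i> * f x)"

definition bounded_cop :: "('a::real_normed_vector \<Rightarrow> 'a) \<Rightarrow> ('a \<Rightarrow> 'a) \<Rightarrow> bool" where
  "bounded_cop J L \<longleftrightarrow> bounded_linear L \<and> (\<forall>x. L (J x) = J (L x))"

definition slice :: "('a::real_normed_vector \<Rightarrow> complex) \<Rightarrow> real \<Rightarrow> 'a set" where
  "slice f \<alpha> = {y. norm y \<le> 1 \<and> Re (f y) \<ge> 1 - \<alpha>}"

definition strongly_exposes ::
  "('a::real_normed_vector \<Rightarrow> 'a) \<Rightarrow> ('a \<Rightarrow> complex) \<Rightarrow> 'a \<Rightarrow> bool" where
  "strongly_exposes J f x \<longleftrightarrow> dual_functional J f \<and> onorm f = 1 \<and> f x = 1 \<and>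
     ((\<lambda>\<alpha>. diameter (slice f \<alpha>)) \<longlongrightarrow> 0) (at_right 0)"

definition C0_contraction_semigroup ::
  "('a::real_normed_vector \<Rightarrow> 'a) \<Rightarrow> (real \<Rightarrow> 'a \<Rightarrow> 'a) \<Rightarrow> bool" where
  "C0_contraction_semigroup J T \<longleftrightarrow>
     (\<forall>t\<ge>0. bounded_cop J (T t) \<and> onorm (T t) \<le> 1) \<and>
     (\<forall>x. T 0 x = x) \<and>
     (\<forall>s t x. s \<ge> 0 \<longrightarrow> t \<ge> 0 \<longrightarrow> T (s + t) x = T s (T t x)) \<and>
     (\<forall>x. ((\<lambda>t. T t x) \<longlongrightarrow> x) (at_right 0))"

text \<open>Graph of the generator A: x \<in> D(A) with A x = y.\<close>
definition generator_at :: "(real \<Rightarrow> 'a::real_normed_vector \<Rightarrow> 'a) \<Rightarrow> 'a \<Rightarrow> 'a \<Rightarrow> bool" where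
  "generator_at T x y \<longleftrightarrow> ((\<lambda>t. (1 / t) *\<^sub>R (T t x - x)) \<longlongrightarrow> y) (at_right 0)"

end

theory Submission imports Defs begin

context fixes J :: "'a::real_normed_vector \<Rightarrow> 'a" assumes cs: "complex_structure J"
begin

lemma J_lin: "linear J" using cs by (simp add: complex_structure_def)
lemma JJ[simp]: "J (J x) = - x" using cs by (simp add: complex_structure_def)
lemma cnorm: "norm (cscale J c x) = cmod c * norm x" using cs by (simp add: complex_structure_def)

lemma J_add: "J (a + b) = J a + J b" using J_lin by (simp add: linear_add)
lemma J_scale: "J (r *\<^sub>R a) = r *\<^sub>R J a" using J_lin by (simp add: linear_scale)
lemma J_diff: "J (a - b) = J a - J b" using J_lin by (simp add: linear_diff)

lemma cscale_mult: "cscale J (a * b) y = cscale J a (cscale J b y)"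
  by (simp add: cscale_def J_add J_scale algebra_simps)

lemma cscale_one[simp]: "cscale J 1 y = y" by (simp add: cscale_def)

lemma cscale_diff_right: "cscale J c y - cscale J c z = cscale J c (y - z)"
  by (simp add: cscale_def J_diff algebra_simps)

lemma cscale_diff_left: "cscale J a y - cscale J b y = cscale J (a - b) y"
  by (simp add: cscale_def algebra_simps)

lemma cscale_scaleR: "r *\<^sub>R cscale J c y = cscale J (of_real r * c) y"
  by (simp add: cscale_def algebra_simps)

end

lemma cscale_cop: assumes "bounded_cop J L" shows "L (cscale J c y) = cscale J c (L y)"
proof -
  interpret bounded_linear L using assms by (simp add: bounded_cop_def)
  show ?thesis using assms by (simp add: cscale_def add scale bounded_cop_def)
qed

lemma cscale_fun: assumes "dual_functional J f" shows "f (cscale J c y) = c * f y"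
proof -
  interpret bounded_linear f using assms by (simp add: dual_functional_def)
  have "f (cscale J c y) = of_real (Re c) * f y + of_real (Im c) * (\<i> * f y)"
    using assms by (simp add: cscale_def add scale dual_functional_def scaleR_conv_of_real)
  also have "\<dots> = (of_real (Re c) + \<i> * of_real (Im c)) * f y" by (simp add: algebra_simps)
  also have "\<dots> = c * f y" by (simp add: complex_eq[symmetric])
  finally show ?thesis .
qed

lemma continuous_cscale: "continuous_on UNIV (\<lambda>c. cscale J c x)"
  unfolding cscale_def by (intro continuous_intros)

lemma vd_quot:
  fixes G :: "real \<Rightarrow> complex"
  assumes "(G has_vector_derivative D) (at p within S)"
  shows "((\<lambda>y. (G y - G p) / of_real (y - p)) \<longlongrightarrow> D) (at p within S)"
proof -
  from assms have "((\<lambda>x. Re (G x)) has_field_derivative (Re D)) (at p within S)"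
     "((\<lambda>x. Im (G x)) has_field_derivative (Im D)) (at p within S)"
    by (auto simp: has_vector_derivative_complex_iff)
  then have "((\<lambda>y. (Re (G y) - Re (G p)) / (y - p)) \<longlongrightarrow> Re D) (at p within S)"
     "((\<lambda>y. (Im (G y) - Im (G p)) / (y - p)) \<longlongrightarrow> Im D) (at p within S)"
    by (auto simp: has_field_derivative_iff)
  then show ?thesis by (simp add: tendsto_complex_iff Re_divide_of_real Im_divide_of_real)
qed


lemma approx:
  assumes cs: "complex_structure J" and se: "strongly_exposes J f x" and nx: "norm x = 1" and e: "e > 0"
  shows "\<exists>\<eta>>0. \<forall>y. norm y \<le> 1 \<and> cmod (f y) \<ge> 1 - \<eta> \<longrightarrow> (\<exists>c. cmod c = 1 \<and> norm (cscale J c y - x) < e)"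
proof -
  have lim: "((\<lambda>\<alpha>. diameter (slice f \<alpha>)) \<longlongrightarrow> 0) (at_right 0)" and fx: "f x = 1"
    and df: "dual_functional J f"
    using se by (auto simp: strongly_exposes_def)
  have "eventually (\<lambda>\<alpha>. diameter (slice f \<alpha>) < e) (at_right (0::real))"
    using order_tendstoD(2)[OF lim e] .
  then obtain b where b: "b > 0" and bP: "\<And>\<alpha>. 0 < \<alpha> \<Longrightarrow> \<alpha> < b \<Longrightarrow> diameter (slice f \<alpha>) < e"
    by (auto simp: eventually_at_right_field)
  define \<eta> where "\<eta> = min (b/2) (1/2)"
  have \<eta>: "\<eta> > 0" "\<eta> < b" "\<eta> \<le> 1/2" using b by (auto simp: \<eta>_def)
  have bnd: "bounded (slice f \<eta>)"
    by (rule bounded_subset[OF bounded_cball[of 0 1]]) (auto simp: slice_def)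
  have xs: "x \<in> slice f \<eta>" using nx fx \<eta> by (simp add: slice_def)
  show ?thesis
  proof (intro exI[of _ \<eta>] conjI allI impI)
    show "\<eta> > 0" by fact
    fix y assume y: "norm y \<le> 1 \<and> 1 - \<eta> \<le> cmod (f y)"
    then have fy0: "f y \<noteq> 0" using \<eta> by auto
    define c where "c = cnj (f y) / of_real (cmod (f y))"
    have c1: "cmod c = 1" using fy0 by (simp add: c_def norm_divide)
    have fc: "f (cscale J c y) = of_real (cmod (f y))"
    proof -
      have "f (cscale J c y) = (f y * cnj (f y)) / of_real (cmod (f y))"
        by (simp add: cscale_fun[OF df] c_def)
      also have "\<dots> = of_real ((cmod (f y))\<^sup>2) / of_real (cmod (f y))"
        by (simp add: complex_norm_square[symmetric])
      also have "\<dots> = of_real (cmod (f y))" using fy0 by (simp add: power2_eq_square)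
      finally show ?thesis .
    qed
    have ys: "cscale J c y \<in> slice f \<eta>"
      using y c1 by (simp add: slice_def fc cnorm[OF cs])
    have "dist (cscale J c y) x \<le> diameter (slice f \<eta>)"
      by (rule diameter_bounded_bound[OF bnd ys xs])
    also have "\<dots> < e" using bP \<eta> by auto
    finally show "\<exists>c. cmod c = 1 \<and> norm (cscale J c y - x) < e"
      using c1 by (auto simp: dist_norm)
  qed
qed


lemma sg_facts:
  assumes "C0_contraction_semigroup J T" "t \<ge> 0"
  shows "bounded_cop J (T t)" "norm (T t v) \<le> norm v" "bounded_linear (T t)"
proof -
  show bc: "bounded_cop J (T t)" using assms by (simp add: C0_contraction_semigroup_def)
  then show bl: "bounded_linear (T t)" by (simp add: bounded_cop_def)
  have "onorm (T t) \<le> 1" using assms by (simp add: C0_contraction_semigroup_def)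
  then show "norm (T t v) \<le> norm v"
  proof -
    have "norm (T t v) \<le> onorm (T t) * norm v" by (rule onorm[OF bl])
    also have "\<dots> \<le> 1 * norm v" by (rule mult_right_mono) (use \<open>onorm (T t) \<le> 1\<close> in auto)
    finally show ?thesis by simp
  qed
qed

lemma eigen:
  assumes cs: "complex_structure J" and se: "strongly_exposes J f x" and nx: "norm x = 1"
    and sg: "C0_contraction_semigroup J T"
    and lim: "((\<lambda>t. cmod (f (T t x))) \<longlongrightarrow> 1) at_top" and s: "s \<ge> 0"
  shows "\<exists>\<mu>. cmod \<mu> = 1 \<and> T s x = cscale J \<mu> x"
proof -
  define S where "S = (\<lambda>c. cscale J c x) ` sphere 0 1"
  have "compact S" unfolding S_def
    by (rule compact_continuous_image[OF continuous_on_subset[OF continuous_cscale]]) auto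
  then have cl: "closed S" by (rule compact_imp_closed)
  have semi: "\<And>a b v. a \<ge> 0 \<Longrightarrow> b \<ge> 0 \<Longrightarrow> T (a + b) v = T a (T b v)"
    using sg by (simp add: C0_contraction_semigroup_def)
  have "T s x \<in> closure S"
    unfolding closure_approachable
  proof (intro allI impI)
    fix \<epsilon> :: real assume \<epsilon>: "\<epsilon> > 0"
    obtain \<eta> where \<eta>: "\<eta> > 0" and
      apx: "\<And>y. norm y \<le> 1 \<Longrightarrow> cmod (f y) \<ge> 1 - \<eta> \<Longrightarrow> \<exists>c. cmod c = 1 \<and> norm (cscale J c y - x) < \<epsilon>/2"
      using approx[OF cs se nx, of "\<epsilon>/2"] \<epsilon> by auto
    have "eventually (\<lambda>t. cmod (f (T t x)) > 1 - \<eta>) at_top"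
      using order_tendstoD(1)[OF lim] \<eta> by auto
    then obtain N where N: "\<And>t. t \<ge> N \<Longrightarrow> cmod (f (T t x)) > 1 - \<eta>"
      by (auto simp: eventually_at_top_linorder)
    define t where "t = max N 0"
    have t: "t \<ge> 0" "t \<ge> N" "s + t \<ge> N" using s by (auto simp: t_def)
    have n1: "norm (T t x) \<le> 1" using sg_facts(2)[OF sg t(1), of x] nx by simp
    have n2: "norm (T (s+t) x) \<le> 1" using sg_facts(2)[OF sg, of "s+t" x] nx s t by simp
    obtain c1 where c1: "cmod c1 = 1" "norm (cscale J c1 (T t x) - x) < \<epsilon>/2"
      using apx[OF n1] N[OF t(2)] by force
    obtain c2 where c2: "cmod c2 = 1" "norm (cscale J c2 (T (s+t) x) - x) < \<epsilon>/2"
      using apx[OF n2] N[OF t(3)] by force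
    have c20: "c2 \<noteq> 0" using c2 by auto
    define v where "v = cscale J c1 (T t x)"
    have Tsv: "T s v = cscale J c1 (T (s+t) x)"
      unfolding v_def using cscale_cop[OF sg_facts(1)[OF sg s]] semi[OF s t(1)] by simp
    have d1: "norm (T s v - T s x) < \<epsilon>/2"
    proof -
      have "T s v - T s x = T s (v - x)"
        using sg_facts(3)[OF sg s] by (simp add: linear_diff bounded_linear.linear)
      then show ?thesis using sg_facts(2)[OF sg s, of "v - x"] c1 by (simp add: v_def)
    qed
    have "cscale J c1 (T (s+t) x) - cscale J (c1/c2) x = cscale J (c1/c2) (cscale J c2 (T (s+t) x) - x)"
    proof -
      have "cscale J (c1/c2) (cscale J c2 (T (s+t) x) - x) = cscale J (c1/c2) (cscale J c2 (T (s+t) x)) - cscale J (c1/c2) x"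
        by (rule cscale_diff_right[OF cs, symmetric])
      also have "cscale J (c1/c2) (cscale J c2 (T (s+t) x)) = cscale J (c1/c2 * c2) (T (s+t) x)"
        by (rule cscale_mult[OF cs, symmetric])
      also have "c1/c2 * c2 = c1" using c20 by simp
      finally show ?thesis by simp
    qed
    then have d2: "norm (T s v - cscale J (c1/c2) x) < \<epsilon>/2"
      using c1 c2 by (simp add: Tsv cnorm[OF cs] norm_divide)
    have "dist (cscale J (c1/c2) x) (T s x) < \<epsilon>"
      using d1 d2 norm_triangle_lt[of "cscale J (c1/c2) x - T s v" "T s v - T s x" \<epsilon>]
      by (simp add: dist_norm norm_minus_commute)
    moreover have "cscale J (c1/c2) x \<in> S" using c1 c2 by (simp add: S_def norm_divide)
    ultimately show "\<exists>y\<in>S. dist y (T s x) < \<epsilon>" by blast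
  qed
  then have "T s x \<in> S" using cl by (simp add: closure_closed)
  then show ?thesis by (auto simp: S_def)
qed

lemma mu_cont:
  fixes \<mu> :: "real \<Rightarrow> complex"
  assumes H1: "\<And>s. s \<ge> 0 \<Longrightarrow> cmod (\<mu> s) = 1"
    and H2: "\<And>s t. s \<ge> 0 \<Longrightarrow> t \<ge> 0 \<Longrightarrow> \<mu> (s + t) = \<mu> s * \<mu> t"
    and H3: "(\<mu> \<longlongrightarrow> 1) (at_right 0)"
  shows "continuous_on {0..} \<mu>"
proof -
  have key: "cmod (\<mu> u - \<mu> t) = cmod (\<mu> (u - t) - 1)" if "0 \<le> t" "t \<le> u" for t u
  proof -
    have "\<mu> u = \<mu> t * \<mu> (u - t)" using H2[of t "u - t"] that by simp
    then have "\<mu> u - \<mu> t = \<mu> t * (\<mu> (u - t) - 1)" by (simp add: algebra_simps)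
    then show ?thesis using H1[of t] that by (simp add: norm_mult)
  qed
  show ?thesis unfolding continuous_on_iff
  proof (intro ballI allI impI)
    fix t e :: real assume t: "t \<in> {0..}" and e: "e > 0"
    have "eventually (\<lambda>h. dist (\<mu> h) 1 < e) (at_right 0)"
      using tendstoD[OF H3 e] .
    then obtain d where d: "d > 0" and dP: "\<And>h. 0 < h \<Longrightarrow> h < d \<Longrightarrow> dist (\<mu> h) 1 < e"
      by (auto simp: eventually_at_right_field)
    show "\<exists>d>0. \<forall>u\<in>{0..}. dist u t < d \<longrightarrow> dist (\<mu> u) (\<mu> t) < e"
    proof (intro exI[of _ d] conjI ballI impI)
      fix u assume u: "u \<in> {0..}" "dist u t < d"
      show "dist (\<mu> u) (\<mu> t) < e"
      proof (cases "u = t")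
        case True then show ?thesis using e by simp
      next
        case False
        show ?thesis
        proof (cases "t \<le> u")
          case True
          then show ?thesis using key[of t u] t u False dP[of "u - t"]
            by (simp add: dist_norm dist_real_def)
        next
          case False
          then show ?thesis using key[of u t] t u dP[of "t - u"]
            by (simp add: dist_norm dist_real_def norm_minus_commute)
        qed
      qed
    qed (use d in auto)
  qed
qed


lemma mu_deriv:
  fixes \<mu> :: "real \<Rightarrow> complex"
  assumes H1: "\<And>s. s \<ge> 0 \<Longrightarrow> cmod (\<mu> s) = 1"
    and H2: "\<And>s t. s \<ge> 0 \<Longrightarrow> t \<ge> 0 \<Longrightarrow> \<mu> (s + t) = \<mu> s * \<mu> t"
    and H3: "(\<mu> \<longlongrightarrow> 1) (at_right 0)"
    and H4: "\<mu> 0 = 1"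
  shows "\<exists>z. ((\<lambda>t. (\<mu> t - 1) / of_real t) \<longlongrightarrow> z) (at_right 0)"
proof -
  have cont: "continuous_on {0..} \<mu>" by (rule mu_cont[OF H1 H2 H3])
  have cont2: "continuous_on {0..2} \<mu>" by (rule continuous_on_subset[OF cont]) auto
  define G where "G u = integral {0..u} \<mu>" for u
  have G0: "G 0 = 0" by (simp add: G_def)
  have dG: "(G has_vector_derivative \<mu> p) (at p within {0..2})" if "p \<in> {0..2}" for p
    unfolding G_def[abs_def] by (rule integral_has_vector_derivative[OF cont2 that])
  have lim0: "((\<lambda>y. G y / of_real y) \<longlongrightarrow> 1) (at_right 0)"
    using vd_quot[OF dG[of 0]] by (simp add: at_within_Icc_at_right G0 H4)
  have "eventually (\<lambda>y. dist (G y / of_real y) 1 < 1) (at_right (0::real))"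
    using tendstoD[OF lim0, of 1] by simp
  then obtain b where b: "b > 0" and bP: "\<And>y. 0 < y \<Longrightarrow> y < b \<Longrightarrow> dist (G y / of_real y) 1 < 1"
    by (auto simp: eventually_at_right_field)
  define \<delta> where "\<delta> = min (b/2) (1/2)"
  have \<delta>01: "\<delta> > 0" "\<delta> < 1" "\<delta> < b" using b by (auto simp: \<delta>_def)
  have "G \<delta> / of_real \<delta> \<noteq> 0" using bP[OF \<delta>01(1) \<delta>01(3)] by auto
  then have \<delta>: "\<delta> > 0" "\<delta> < 1" "G \<delta> \<noteq> 0" using \<delta>01 by auto
  have shift: "G (t + \<delta>) - G t = \<mu> t * G \<delta>" if t: "t \<ge> 0" "t \<le> 1" for t
  proof -
    have int: "\<mu> integrable_on {0..t+\<delta>}"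
      by (rule integrable_continuous_interval, rule continuous_on_subset[OF cont]) auto
    have "integral {0..t} \<mu> + integral {t..t+\<delta>} \<mu> = integral {0..t+\<delta>} \<mu>"
      by (rule Henstock_Kurzweil_Integration.integral_combine[OF t(1) _ int]) (use \<delta> in auto)
    then have "G (t + \<delta>) - G t = integral {t..t+\<delta>} \<mu>" by (simp add: G_def algebra_simps)
    also have "\<dots> = integral (cbox (0+t) (\<delta>+t)) \<mu>" by (simp add: add.commute)
    also have "\<dots> = integral (cbox 0 \<delta>) (\<mu> \<circ> (+) t)" by (rule integral_shift_cbox_plus[symmetric])
    also have "\<dots> = integral {0..\<delta>} (\<lambda>s. \<mu> t * \<mu> s)"
      unfolding cbox_interval by (rule integral_cong) (simp add: H2 t)
    also have "\<dots> = \<mu> t * G \<delta>" by (simp add: G_def)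
    finally show ?thesis .
  qed
  have limd: "((\<lambda>h. (G (\<delta> + h) - G \<delta>) / of_real h) \<longlongrightarrow> \<mu> \<delta>) (at_right 0)"
  proof -
    have "((\<lambda>y. (G y - G \<delta>) / of_real (y - \<delta>)) \<longlongrightarrow> \<mu> \<delta>) (at \<delta>)"
      using vd_quot[OF dG[of \<delta>]] \<delta> by (simp add: at_within_Icc_at)
    from LIM_offset_zero[OF this] show ?thesis
      by (auto intro: tendsto_within_subset)
  qed
  have "((\<lambda>t. ((G (\<delta> + t) - G \<delta>) / of_real t - G t / of_real t) / G \<delta>) \<longlongrightarrow> (\<mu> \<delta> - 1) / G \<delta>) (at_right 0)"
    by (intro tendsto_intros limd lim0 \<delta>)
  moreover have "eventually (\<lambda>t. ((G (\<delta> + t) - G \<delta>) / of_real t - G t / of_real t) / G \<delta> = (\<mu> t - 1) / of_real t) (at_right (0::real))"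
  proof -
    have ev01: "eventually (\<lambda>t::real. 0 < t \<and> t < 1) (at_right 0)"
      by (auto simp: eventually_at_right_field intro!: exI[of _ 1])
    show ?thesis using ev01
  proof (rule eventually_mono)
    fix t :: real assume t: "0 < t \<and> t < 1"
    then have t: "0 < t" "t < 1" by auto
    have "G (\<delta> + t) - G \<delta> - G t = (\<mu> t - 1) * G \<delta>"
      using shift[of t] t by (simp add: algebra_simps)
    then show "((G (\<delta> + t) - G \<delta>) / of_real t - G t / of_real t) / G \<delta> = (\<mu> t - 1) / of_real t"
      using t \<delta> by (simp add: field_simps)
  qed
  qed
  ultimately show ?thesis by (blast intro: Lim_transform_eventually)
qed


lemma re_zero:
  fixes \<mu> :: "real \<Rightarrow> complex"
  assumes H1: "\<And>s. s \<ge> 0 \<Longrightarrow> cmod (\<mu> s) = 1"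
    and lim: "((\<lambda>t. (\<mu> t - 1) / of_real t) \<longlongrightarrow> z) (at_right 0)"
  shows "Re z = 0"
proof -
  define w where "w t = (\<mu> t - 1) / of_real t" for t
  have id: "Re (w t) = - (t * (cmod (w t))\<^sup>2) / 2" if t: "t > 0" for t
  proof -
    have m: "\<mu> t = 1 + of_real t * w t" using t by (simp add: w_def field_simps)
    have "(cmod (\<mu> t))\<^sup>2 = 1" using H1[of t] t by simp
    then have "(Re (\<mu> t))\<^sup>2 + (Im (\<mu> t))\<^sup>2 = 1" by (simp add: cmod_power2)
    then have "(1 + t * Re (w t))\<^sup>2 + (t * Im (w t))\<^sup>2 = 1" by (simp add: m)
    then have "t * (2 * Re (w t) + t * ((Re (w t))\<^sup>2 + (Im (w t))\<^sup>2)) = 0"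
      by (simp add: power2_eq_square algebra_simps)
    then have "2 * Re (w t) + t * ((Re (w t))\<^sup>2 + (Im (w t))\<^sup>2) = 0" using t by simp
    then show ?thesis by (simp add: cmod_power2)
  qed
  have l1: "((\<lambda>t. Re (w t)) \<longlongrightarrow> Re z) (at_right 0)"
    using lim unfolding w_def by (intro tendsto_intros) auto
  have "((\<lambda>t. - (t * (cmod (w t))\<^sup>2) / 2) \<longlongrightarrow> - (0 * (cmod z)\<^sup>2) / 2) (at_right (0::real))"
    using lim unfolding w_def by (intro tendsto_intros) auto
  then have l2: "((\<lambda>t. - (t * (cmod (w t))\<^sup>2) / 2) \<longlongrightarrow> 0) (at_right (0::real))" by simp
  have ev: "eventually (\<lambda>t. - (t * (cmod (w t))\<^sup>2) / 2 = Re (w t)) (at_right (0::real))"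
    by (auto simp: eventually_at_right_field id intro!: exI[of _ 1])
  have "((\<lambda>t. Re (w t)) \<longlongrightarrow> 0) (at_right 0)"
    by (rule Lim_transform_eventually[OF l2 ev])
  then show ?thesis using l1 tendsto_unique[OF trivial_limit_at_right_real] by blast
qed


theorem theorem4:
  fixes J :: "'a::banach \<Rightarrow> 'a" and T :: "real \<Rightarrow> 'a \<Rightarrow> 'a"
    and x :: 'a and f :: "'a \<Rightarrow> complex"
  assumes "complex_structure J"
    and "norm x = 1"
    and "strongly_exposes J f x"
    and "C0_contraction_semigroup J T"
    and "((\<lambda>t. cmod (f (T t x))) \<longlongrightarrow> 1) at_top"
  shows "\<exists>l::real. generator_at T x (cscale J (\<i> * complex_of_real l) x)"
proof -
  note cs = assms(1) and nx = assms(2) and se = assms(3) and sg = assms(4) and lim = assms(5)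
  have df: "dual_functional J f" and fx: "f x = 1" using se by (auto simp: strongly_exposes_def)
  have fbl: "bounded_linear f" using df by (simp add: dual_functional_def)
  define \<mu> where "\<mu> s = f (T s x)" for s
  have eig: "T s x = cscale J (\<mu> s) x \<and> cmod (\<mu> s) = 1" if s: "s \<ge> 0" for s
  proof -
    obtain m where m: "cmod m = 1" "T s x = cscale J m x" using eigen[OF cs se nx sg lim s] by blast
    have "\<mu> s = m" using m by (simp add: \<mu>_def cscale_fun[OF df] fx)
    then show ?thesis using m by simp
  qed
  have H1: "\<And>s. s \<ge> 0 \<Longrightarrow> cmod (\<mu> s) = 1" using eig by blast
  have H2: "\<mu> (s + t) = \<mu> s * \<mu> t" if "s \<ge> 0" "t \<ge> 0" for s t
  proof -
    have "T (s + t) x = T s (T t x)" using sg that by (simp add: C0_contraction_semigroup_def)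
    also have "\<dots> = cscale J (\<mu> t) (T s x)"
      using eig[OF that(2)] cscale_cop[OF sg_facts(1)[OF sg that(1)]] by simp
    finally show ?thesis by (simp add: \<mu>_def cscale_fun[OF df] mult.commute)
  qed
  have H3: "(\<mu> \<longlongrightarrow> 1) (at_right 0)"
  proof -
    have "((\<lambda>t. T t x) \<longlongrightarrow> x) (at_right 0)" using sg by (simp add: C0_contraction_semigroup_def)
    from bounded_linear.tendsto[OF fbl this] show ?thesis by (simp add: \<mu>_def[abs_def] fx)
  qed
  have H4: "\<mu> 0 = 1" using sg fx by (simp add: \<mu>_def C0_contraction_semigroup_def)
  obtain z where z: "((\<lambda>t. (\<mu> t - 1) / of_real t) \<longlongrightarrow> z) (at_right 0)"
    using mu_deriv[OF H1 H2 H3 H4] by blast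
  have rz: "Re z = 0" by (rule re_zero[OF H1 z])
  have zeq: "\<i> * complex_of_real (Im z) = z" using rz by (simp add: complex_eq_iff)
  have l1: "((\<lambda>t. cscale J ((\<mu> t - 1) / of_real t) x) \<longlongrightarrow> cscale J z x) (at_right 0)"
    unfolding cscale_def using z by (intro tendsto_intros)
  have ev: "eventually (\<lambda>t. cscale J ((\<mu> t - 1) / of_real t) x = (1 / t) *\<^sub>R (T t x - x)) (at_right (0::real))"
    unfolding eventually_at_right_field
  proof (intro exI[of _ 1] conjI allI impI)
    fix t :: real assume "0 < t" "t < 1"
    then have t: "t > 0" by simp
    have "(1 / t) *\<^sub>R (T t x - x) = (1 / t) *\<^sub>R (cscale J (\<mu> t) x - cscale J 1 x)"
      using eig[of t] t cscale_one[OF cs] by simp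
    also have "\<dots> = cscale J (of_real (1/t) * (\<mu> t - 1)) x"
      by (simp add: cscale_diff_left[OF cs] cscale_scaleR[OF cs])
    also have "of_real (1/t) * (\<mu> t - 1) = (\<mu> t - 1) / of_real t" by (simp add: field_simps)
    finally show "cscale J ((\<mu> t - 1) / of_real t) x = (1 / t) *\<^sub>R (T t x - x)" by simp
  qed simp
  have "generator_at T x (cscale J z x)"
    unfolding generator_at_def by (rule Lim_transform_eventually[OF l1 ev])
  then show ?thesis using zeq by metis
qed

end
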